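(* For every simple graph $G$ of order $n$ with spectral radius $\mu(G)$, \[ \frac{n}{n - \mu(G)} < \phi(G) + \frac{1}{3}. \]
   Context: $\mu(G)$ denotes the largest eigenvalue of the adjacency matrix of $G$. $\phi(G)$ is the smallest integer $r$ for which the vertex set has a partition $V(G) = V_1 \cup \dots \cup V_r$ into $r$ parts such that, writing $n_i = |V_i|$, every vertex $v \in V_i$ has degree $d(v) \le n - n_i$, for all $i = 1,\dots,r$. *)

theory Defs
  imports "HOL-Analysis.Analysis"
begin

text \<open>A finite simple graph on the finite vertex type 'a, given by an edge relation
  that is symmetric and irreflexive. The order n of the graph is CARD('a).\<close>

definition simple_graph :: "('a::finite \<Rightarrow> 'a \<Rightarrow> bool) \<Rightarrow> bool" where
  "simple_graph E \<longleftrightarrow> (\<forall>u v. E u v \<longrightarrow> E v u) \<and> (\<forall>v. \<not> E v v)"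

definition degree :: "('a::finite \<Rightarrow> 'a \<Rightarrow> bool) \<Rightarrow> 'a \<Rightarrow> nat" where
  "degree E v = card {u. E v u}"

definition adjacency_matrix :: "('a::finite \<Rightarrow> 'a \<Rightarrow> bool) \<Rightarrow> real ^ 'a ^ 'a" where
  "adjacency_matrix E = (\<chi> i j. if E i j then 1 else 0)"

definition mu :: "('a::finite \<Rightarrow> 'a \<Rightarrow> bool) \<Rightarrow> real" where
  "mu E = Max {c. \<exists>x::real ^ 'a. x \<noteq> 0 \<and> adjacency_matrix E *v x = c *\<^sub>R x}"

text \<open>A partition of V into r (nonempty) parts V_0,...,V_{r-1}, encoded by the part index
  function f, such that every vertex v in part V_i has d(v) \<le> n - |V_i|.\<close>

definition good_partition :: "('a::finite \<Rightarrow> 'a \<Rightarrow> bool) \<Rightarrow> nat \<Rightarrow> ('a \<Rightarrow> nat) \<Rightarrow> bool" where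
  "good_partition E r f \<longleftrightarrow> f ` UNIV = {0..<r} \<and>
     (\<forall>v. degree E v \<le> CARD('a) - card {u. f u = f v})"

definition phi :: "('a::finite \<Rightarrow> 'a \<Rightarrow> bool) \<Rightarrow> nat" where
  "phi E = (LEAST r. \<exists>f. good_partition E r f)"

end

theory Submission
  imports Defs
begin


lemma sym_inner:
  fixes A :: "real^'n^'n"
  assumes "transpose A = A"
  shows "(A *v x) \<bullet> y = x \<bullet> (A *v y)"
proof -
  have "A *v x = x v* A" using transpose_matrix_vector[of A x] assms by simp
  then show ?thesis by (simp add: dot_lmul_matrix)
qed

lemma sym_eig_exists:
  fixes A :: "real^'n^'n"
  assumes sym: "transpose A = A"
  shows "\<exists>c x. x \<noteq> 0 \<and> A *v x = c *\<^sub>R x"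
proof -
  let ?q = "\<lambda>x. x \<bullet> (A *v x)"
  have cont: "continuous_on (sphere 0 1) ?q"
    by (intro continuous_intros linear_continuous_on matrix_vector_mul_linear)
  have ne: "sphere (0::real^'n) 1 \<noteq> {}"
  proof -
    have "axis undefined (1::real) \<in> sphere (0::real^'n) 1" by simp
    then show ?thesis by blast
  qed
  obtain x0 where x0: "x0 \<in> sphere 0 1" and mx: "\<And>y. y \<in> sphere 0 1 \<Longrightarrow> ?q y \<le> ?q x0"
    using continuous_attains_sup[OF compact_sphere ne cont] by blast
  define l where "l = ?q x0"
  have nx0: "x0 \<bullet> x0 = 1" using x0 by (simp add: dot_square_norm)
  have bound: "?q y \<le> l * (y \<bullet> y)" for y
  proof (cases "y = 0")
    case True then show ?thesis by simp
  next
    case False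
    define y' where "y' = (1 / norm y) *\<^sub>R y"
    have "y' \<in> sphere 0 1" using False by (simp add: y'_def)
    then have "?q y' \<le> l" using mx l_def by simp
    moreover have "?q y' = ?q y / (norm y)^2"
      by (simp add: y'_def matrix_vector_mult_scaleR power2_eq_square)
    moreover have "y \<bullet> y = (norm y)^2" by (simp add: dot_square_norm)
    moreover have "(norm y)^2 > 0" using False by simp
    ultimately show ?thesis by (simp add: divide_le_eq mult.commute)
  qed
  define h where "h = A *v x0 - l *\<^sub>R x0"
  have hx: "h \<bullet> x0 = 0"
  proof -
    have "h \<bullet> x0 = (A *v x0) \<bullet> x0 - l * (x0 \<bullet> x0)" by (simp add: h_def inner_diff_left)
    also have "(A *v x0) \<bullet> x0 = l" unfolding l_def by (rule inner_commute)
    finally show ?thesis using nx0 by simp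
  qed
  have expand: "?q (x0 + t *\<^sub>R h) - l * ((x0 + t *\<^sub>R h) \<bullet> (x0 + t *\<^sub>R h))
      = 2 * t * (h \<bullet> h) + t^2 * (?q h - l * (h \<bullet> h))" for t
  proof -
    have s: "x0 \<bullet> (A *v h) = (A *v x0) \<bullet> h" using sym_inner[OF sym, of x0 h] by simp
    have "(A *v x0) \<bullet> h = h \<bullet> h + l * (x0 \<bullet> h)"
      by (simp add: h_def inner_diff_left inner_diff_right inner_commute algebra_simps)
    then show ?thesis using s hx nx0
      by (simp add: matrix_vector_right_distrib matrix_vector_mult_scaleR inner_add_left inner_add_right
          algebra_simps power2_eq_square l_def inner_commute)
  qed
  define g where "g = ?q h - l * (h \<bullet> h)"
  have g0: "g \<le> 0" using bound[of h] by (simp add: g_def)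
  have "2 * t * (h \<bullet> h) + t^2 * g \<le> 0" for t
    using bound[of "x0 + t *\<^sub>R h"] expand[of t] by (simp add: g_def)
  have hh: "h \<bullet> h = 0"
  proof (rule ccontr)
    assume "h \<bullet> h \<noteq> 0"
    then have p: "h \<bullet> h > 0" by (simp add: inner_gt_zero_iff)
    define t where "t = (h \<bullet> h) / (1 - g)"
    have tp: "t > 0" using p g0 by (simp add: t_def)
    have "2 * t * (h \<bullet> h) + t^2 * g \<le> 0"
      using bound[of "x0 + t *\<^sub>R h"] expand[of t] by (simp add: g_def)
    then have "t * (2 * (h \<bullet> h) + t * g) \<le> 0"
      by (simp add: power2_eq_square algebra_simps)
    then have "2 * (h \<bullet> h) + t * g \<le> 0" using tp by (simp add: mult_le_0_iff)
    moreover have "t * g > - (h \<bullet> h)"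
    proof -
      have "t * (1 - g) = h \<bullet> h" using g0 by (simp add: t_def)
      then have "t * g = t - h \<bullet> h" by (simp add: algebra_simps)
      then show ?thesis using tp by linarith
    qed
    ultimately show False using p by linarith
  qed
  then have "h = 0" by simp
  moreover have "x0 \<noteq> 0" using x0 by auto
  ultimately show ?thesis unfolding h_def by (metis eq_iff_diff_eq_0)
qed

lemma eig_finite:
  fixes A :: "real^'n^'n"
  assumes sym: "transpose A = A"
  shows "finite {c. \<exists>x. x \<noteq> 0 \<and> A *v x = c *\<^sub>R x}"
proof -
  define S where "S = {c. \<exists>x. x \<noteq> 0 \<and> A *v x = c *\<^sub>R x}"
  define ev where "ev c = (SOME x. x \<noteq> 0 \<and> A *v x = c *\<^sub>R x)" for c
  have ev: "ev c \<noteq> 0 \<and> A *v ev c = c *\<^sub>R ev c" if "c \<in> S" for c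
  proof -
    from that obtain x where "x \<noteq> 0 \<and> A *v x = c *\<^sub>R x" unfolding S_def by blast
    then show ?thesis unfolding ev_def by (rule someI)
  qed
  have orth: "ev c \<bullet> ev d = 0" if "c \<in> S" "d \<in> S" "c \<noteq> d" for c d
  proof -
    have "c * (ev c \<bullet> ev d) = (A *v ev c) \<bullet> ev d" using ev[OF that(1)] by simp
    also have "\<dots> = ev c \<bullet> (A *v ev d)" by (rule sym_inner[OF sym])
    also have "\<dots> = d * (ev c \<bullet> ev d)" using ev[OF that(2)] by simp
    finally have "(c - d) * (ev c \<bullet> ev d) = 0" by (simp add: algebra_simps)
    then show ?thesis using that(3) by simp
  qed
  have inj: "inj_on ev S"
  proof (rule inj_onI)
    fix c d assume cd: "c \<in> S" "d \<in> S" "ev c = ev d"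
    show "c = d"
    proof (rule ccontr)
      assume "c \<noteq> d"
      then have "ev c \<bullet> ev c = 0" using orth[OF cd(1,2)] cd(3) by simp
      then show False using ev[OF cd(1)] by simp
    qed
  qed
  have "pairwise orthogonal (ev ` S)"
    unfolding pairwise_def orthogonal_def using orth by (metis imageE)
  moreover have "0 \<notin> ev ` S" using ev by auto
  ultimately have "independent (ev ` S)" by (rule pairwise_orthogonal_independent)
  then have "finite (ev ` S)" using independent_bound by blast
  then have "finite S" using finite_imageD inj by blast
  then show ?thesis unfolding S_def .
qed

lemma adj_sym:
  assumes "simple_graph E"
  shows "transpose (adjacency_matrix E) = adjacency_matrix E"
  using assms unfolding simple_graph_def adjacency_matrix_def transpose_def
  by (auto simp: vec_eq_iff)

lemma mu_eig:
  assumes "simple_graph E"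
  shows "\<exists>x. x \<noteq> 0 \<and> adjacency_matrix E *v x = mu E *\<^sub>R x"
proof -
  let ?S = "{c. \<exists>x. x \<noteq> 0 \<and> adjacency_matrix E *v x = c *\<^sub>R x}"
  have "finite ?S" using eig_finite[OF adj_sym[OF assms]] .
  moreover have "?S \<noteq> {}" using sym_eig_exists[OF adj_sym[OF assms]] by blast
  ultimately have "Max ?S \<in> ?S" by (rule Max_in)
  then show ?thesis unfolding mu_def by blast
qed

lemma adj_row:
  "(adjacency_matrix E *v x) $ v = sum (\<lambda>u. x $ u) {u. E v u}"
proof -
  have "(adjacency_matrix E *v x) $ v = (\<Sum>u\<in>UNIV. (if E v u then 1 else 0) * x $ u)"
    by (simp add: adjacency_matrix_def matrix_vector_mult_def)
  also have "\<dots> = (\<Sum>u\<in>UNIV. if E v u then x $ u else 0)" by (rule sum.cong) auto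
  also have "\<dots> = sum (\<lambda>u. x $ u) {u. E v u}" by (simp add: sum.If_cases)
  finally show ?thesis .
qed



lemma alg_final:
  fixes n b u T1 :: real
  assumes u: "0 < u" and ub: "u < b" and bn: "b < n"
    and T1: "T1 = (n-b)*b - (n-u)*(b-u)" and T1p: "T1 > 0"
  shows "n/u - 1/3 < 1 + (n-b)^2/T1"
proof -
  have P: "(3*n - 4*u)*T1 < 3*u*(n-b)^2"
  proof (cases "3*n - 4*u \<le> 0")
    case True
    have "(3*n - 4*u)*T1 \<le> 0" using True T1p by (simp add: mult_nonpos_nonneg)
    moreover have "3*u*(n-b)^2 > 0" using u bn by simp
    ultimately show ?thesis by linarith
  next
    case False
    have id: "4*(3*n-u)*(3*u*(n-b)^2 - (3*n - 4*u)*T1)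
        = (2*(3*n-u)*b + 4*u^2 - 9*n*u)^2 + u^2*n*(3*n-4*u)"
      unfolding T1 by (simp add: algebra_simps power2_eq_square)
    have "u^2*n*(3*n-4*u) > 0" using False u ub bn by simp
    then have "4*(3*n-u)*(3*u*(n-b)^2 - (3*n - 4*u)*T1) > 0"
      unfolding id by (simp add: add_nonneg_pos)
    moreover have "4*(3*n-u) > 0"
    proof -
      have "3*n - 4*u > 0" using False by linarith
      then show ?thesis using u by (simp add: algebra_simps)
    qed
    ultimately have "3*u*(n-b)^2 - (3*n - 4*u)*T1 > 0"
      by (simp add: zero_less_mult_iff)
    then show ?thesis by linarith
  qed
  have e1: "(n-b)^2/T1 - (3*n-4*u)/(3*u) = (3*u*(n-b)^2 - (3*n-4*u)*T1)/(3*u*T1)"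
    using u T1p by (simp add: field_simps)
  have "(3*u*(n-b)^2 - (3*n-4*u)*T1)/(3*u*T1) > 0" using P u T1p by simp
  then have "(3*n-4*u)/(3*u) < (n-b)^2/T1" using e1 by linarith
  moreover have "n/u - 1/3 = 1 + (3*n-4*u)/(3*u)" using u by (simp add: field_simps)
  ultimately show ?thesis by linarith
qed

lemma hm_am:
  fixes t :: "'a \<Rightarrow> real"
  assumes fin: "finite H" and ne: "H \<noteq> {}" and pos: "\<And>v. v \<in> H \<Longrightarrow> t v > 0"
  shows "real (card H)^2 / sum t H \<le> sum (\<lambda>v. 1 / t v) H"
proof -
  define T where "T = sum t H"
  define N where "N = real (card H)"
  have Np: "N > 0" using fin ne by (simp add: N_def card_gt_0_iff)
  have Tp: "T > 0" unfolding T_def using fin ne pos by (simp add: sum_pos)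
  define m where "m = T / N"
  have mp: "m > 0" using Np Tp by (simp add: m_def)
  have trm: "2/m - t v/m^2 \<le> 1 / t v" if "v \<in> H" for v
  proof -
    have tv: "t v > 0" using pos that .
    have "1 / t v - (2/m - t v/m^2) = (t v - m)^2 / (t v * m^2)"
      using tv mp by (simp add: field_simps power2_eq_square)
    also have "\<dots> \<ge> 0" using tv mp by simp
    finally show ?thesis by linarith
  qed
  have "sum (\<lambda>v. 2/m - t v/m^2) H \<le> sum (\<lambda>v. 1 / t v) H"
    using trm by (rule sum_mono)
  moreover have "sum (\<lambda>v. 2/m - t v/m^2) H = 2*N/m - T/m^2"
    by (simp add: sum_subtractf sum_divide_distrib[symmetric] T_def N_def)
  moreover have "2*N/m - T/m^2 = N^2 / T"
    using Np Tp by (simp add: m_def field_simps power2_eq_square)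
  ultimately show ?thesis by (simp add: N_def T_def)
qed



lemma sum_le_top:
  fixes y :: "'a::finite \<Rightarrow> real"
  assumes zH: "\<And>v. v \<in> H \<Longrightarrow> z \<le> y v" and zn: "\<And>u. u \<notin> H \<Longrightarrow> y u \<le> z" and z0: "z \<ge> 0"
    and S: "card S \<le> k"
  shows "sum y S \<le> sum y H + (real k - real (card H)) * z"
proof -
  have a: "sum y S = sum y (S \<inter> H) + sum y (S - H)" by (rule sum.Int_Diff) simp
  have b: "sum y H = sum y (H \<inter> S) + sum y (H - S)" by (rule sum.Int_Diff) simp
  have c: "sum y (S - H) \<le> real (card (S - H)) * z"
    using sum_bounded_above[of "S - H" y z] zn by auto
  have d: "real (card (H - S)) * z \<le> sum y (H - S)"
    using sum_bounded_below[of "H - S" z y] zH by auto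
  have e: "card S = card (S \<inter> H) + card (S - H)" by (rule card_Int_Diff) simp
  have f: "card H = card (H \<inter> S) + card (H - S)" by (rule card_Int_Diff) simp
  have g: "real (card (S - H)) \<le> real k - real (card H) + real (card (H - S))"
    using e f S by (simp add: Int_commute)
  have "real (card (S - H)) * z \<le> (real k - real (card H) + real (card (H - S))) * z"
    using g z0 by (rule mult_right_mono)
  then show ?thesis using a b c d by (simp add: Int_commute algebra_simps)
qed

lemma parts_sum:
  fixes f :: "'a::finite \<Rightarrow> nat"
  assumes part: "f ` UNIV = {0..<r}"
  shows "(\<Sum>v\<in>UNIV. 1 / real (card {u. f u = f v})) = real r"
proof -
  have "(\<Sum>v\<in>UNIV. 1 / real (card {u. f u = f v}))
      = (\<Sum>i\<in>f ` UNIV. \<Sum>v\<in>{x. x \<in> UNIV \<and> f x = i}. 1 / real (card {u. f u = f v}))"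
    by (rule sum.image_gen) simp
  also have "\<dots> = (\<Sum>i\<in>f ` UNIV. 1)"
  proof (rule sum.cong[OF refl])
    fix i assume "i \<in> f ` UNIV"
    then obtain v0 where v0: "f v0 = i" by auto
    have "(\<Sum>v\<in>{x. x \<in> UNIV \<and> f x = i}. 1 / real (card {u. f u = f v}))
        = (\<Sum>v\<in>{x. f x = i}. 1 / real (card {u. f u = i}))"
      by (rule sum.cong) auto
    also have "\<dots> = 1"
    proof -
      have "v0 \<in> {u. f u = i}" using v0 by simp
      then have "{u. f u = i} \<noteq> {}" by blast
      then have "card {u. f u = i} > 0" by (subst card_gt_0_iff) simp
      then show ?thesis using v0 by auto
    qed
    finally show "(\<Sum>v\<in>{x. x \<in> UNIV \<and> f x = i}. 1 / real (card {u. f u = f v})) = 1" .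
  qed
  also have "\<dots> = real r" using part by simp
  finally show ?thesis .
qed

lemma key:
  fixes y :: "'a::finite \<Rightarrow> real" and Nb :: "'a \<Rightarrow> 'a set" and f :: "'a \<Rightarrow> nat"
    and c :: real and r :: nat
  assumes ynn: "\<And>v. y v \<ge> 0"
    and ypos: "\<exists>v. y v > 0"
    and cpos: "c > 0"
    and eig: "\<And>v. c * y v \<le> sum y (Nb v)"
    and irr: "\<And>v. v \<notin> Nb v"
    and deg: "\<And>v. card (Nb v) + card {u. f u = f v} \<le> CARD('a)"
    and part: "f ` UNIV = {0..<r}"
  shows "real CARD('a) / (real CARD('a) - c) < real r + 1/3"
proof -
  define n where "n = CARD('a)"
  define sz where "sz v = card {u. f u = f v}" for v
  have sz1: "sz v \<ge> 1" for v
  proof -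
    have "v \<in> {u. f u = f v}" by simp
    then have "{u. f u = f v} \<noteq> {}" by blast
    then show ?thesis unfolding sz_def by (simp add: Suc_le_eq card_gt_0_iff)
  qed
  have rsum: "(\<Sum>v\<in>UNIV. 1 / real (sz v)) = real r"
    unfolding sz_def by (rule parts_sum[OF part])
  define b where "b = Max (range sz)"
  obtain w0 where w0: "sz w0 = b" unfolding b_def
    by (metis (mono_tags, lifting) Max_in UNIV_not_empty finite finite_imageI image_iff image_is_empty)
  have szb: "sz v \<le> b" for v unfolding b_def by (rule Max_ge) auto
  have b1: "b \<ge> 1" using sz1 w0 by metis
  define PL where "PL = {u. f u = f w0}"
  have cardPL: "card PL = b" using w0 by (simp add: PL_def sz_def)
  have szPL: "sz u = b" if "u \<in> PL" for u
    using that w0 by (simp add: PL_def sz_def)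
  have bn: "b \<le> n" unfolding n_def using cardPL[symmetric] card_mono[of UNIV PL] by simp
  have rnb: "real n / real b \<le> real r"
  proof -
    have "(\<Sum>v\<in>(UNIV::'a set). 1 / real b) \<le> (\<Sum>v\<in>UNIV. 1 / real (sz v))"
      by (rule sum_mono) (use sz1 szb b1 in \<open>auto intro!: divide_left_mono mult_pos_pos simp: Suc_le_eq\<close>)
    then show ?thesis using rsum by (simp add: n_def)
  qed
  define m where "m = Max (range y)"
  obtain v0 where v0: "y v0 = m" unfolding m_def
    by (metis (mono_tags, lifting) Max_in UNIV_not_empty finite finite_imageI image_iff image_is_empty)
  have ym: "y v \<le> m" for v unfolding m_def by (rule Max_ge) auto
  have mpos: "m > 0" using ypos ym by (meson less_le_trans)
  have summ: "sum y S \<le> real (card S) * m" for S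
    using sum_bounded_above[of S y m] ym by simp
  have cn: "c < real n"
  proof -
    have "Nb v0 \<subset> UNIV" using irr by blast
    then have "card (Nb v0) < n" unfolding n_def by (rule psubset_card_mono[OF finite])
    then have "real (card (Nb v0)) * m < real n * m" using mpos by simp
    moreover have "c * m \<le> real (card (Nb v0)) * m" using eig[of v0] summ[of "Nb v0"] v0 by simp
    ultimately show ?thesis using mpos by (simp add: mult_less_cancel_right)
  qed
  define sig where "sig k = Max ((\<lambda>S. sum y S) ` {S. card S \<le> k})" for k
  have sig_ge: "sum y S \<le> sig k" if "card S \<le> k" for S k
    unfolding sig_def by (rule Max_ge) (use that in auto)
  have sig_in: "\<exists>S. card S \<le> k \<and> sig k = sum y S" for k
  proof -
    have "{S::'a set. card S \<le> k} \<noteq> {}" by (metis card.empty empty_iff mem_Collect_eq zero_le)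
    then have "sig k \<in> (\<lambda>S. sum y S) ` {S. card S \<le> k}"
      unfolding sig_def by (intro Max_in) auto
    then show ?thesis by auto
  qed
  define th where "th = sig (n - b)"
  define H where "H = {v. c * y v > th}"
  define N where "N = card H"
  have PLH: "PL \<inter> H = {}"
  proof -
    have "c * y w \<le> th" if "w \<in> PL" for w
    proof -
      have "card (Nb w) \<le> n - b" using deg[of w] szPL[OF that] by (simp add: n_def sz_def)
      then show ?thesis using eig[of w] sig_ge[of "Nb w" "n - b"] by (simp add: th_def)
    qed
    then show ?thesis unfolding H_def by force
  qed
  have Hsub: "H \<subseteq> UNIV - PL" using PLH by blast
  have Nnb: "N \<le> n - b"
  proof -
    have "N \<le> card (UNIV - PL)" unfolding N_def by (rule card_mono[OF _ Hsub]) simp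
    also have "card (UNIV - PL) = n - b" using cardPL by (simp add: card_Diff_subset n_def)
    finally show ?thesis .
  qed
  show ?thesis
  proof (cases "H = {}")
    case True
    obtain S0 where S0: "card S0 \<le> n - b" "th = sum y S0" using sig_in th_def by blast
    have "c * m \<le> th" using True v0 unfolding H_def by (metis empty_iff mem_Collect_eq not_le)
    also have "\<dots> \<le> real (card S0) * m" using S0 summ by simp
    also have "\<dots> \<le> real (n - b) * m" using S0 mpos by simp
    finally have "c \<le> real (n - b)" using mpos by simp
    then have cb: "real b \<le> real n - c" using bn by simp
    have "real n / (real n - c) \<le> real n / real b"
      using cb b1 by (intro divide_left_mono) auto
    then show ?thesis using rnb unfolding n_def by linarith
  next
    case False
    then have Npos: "N \<ge> 1" unfolding N_def by (simp add: Suc_le_eq card_gt_0_iff)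
    define Y where "Y = sum y H"
    have thY: "Y \<le> th" unfolding Y_def th_def by (rule sig_ge) (use Nnb N_def in simp)
    have Y0: "Y \<ge> 0" unfolding Y_def by (rule sum_nonneg) (use ynn in auto)
    have "(\<Sum>v\<in>H. th) < (\<Sum>v\<in>H. c * y v)"
      by (rule sum_strict_mono) (use False H_def in auto)
    then have "real N * th < c * Y" by (simp add: Y_def N_def sum_distrib_left)
    moreover have "real N * Y \<le> real N * th" using thY by (simp add: mult_left_mono)
    ultimately have cNY: "real N * Y < c * Y" by linarith
    then have Ypos: "Y > 0" using Y0 by (cases "Y = 0") auto
    have cN: "real N < c" using cNY Ypos by simp
    have w0H: "w0 \<notin> H" using PLH by (auto simp: PL_def)
    define z where "z = Max (y ` (UNIV - H))"
    obtain w1 where w1: "w1 \<notin> H" "y w1 = z"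
    proof -
      have "(UNIV - H) \<noteq> {}" using w0H by blast
      then have "z \<in> y ` (UNIV - H)" unfolding z_def by (intro Max_in) auto
      then show ?thesis using that by blast
    qed
    have yz: "y u \<le> z" if "u \<notin> H" for u unfolding z_def by (rule Max_ge) (use that in auto)
    have zy: "z \<le> y v" if "v \<in> H" for v
    proof -
      have "c * y w1 \<le> th" using w1 unfolding H_def by simp
      also have "th < c * y v" using that unfolding H_def by simp
      finally show ?thesis using w1 cpos by simp
    qed
    have z0: "z \<ge> 0" using w1 ynn by metis
    have top: "sum y S \<le> Y + (real k - real N) * z" if "card S \<le> k" for S k
      unfolding Y_def N_def by (rule sum_le_top[OF zy yz z0 that])
    have B: "c * z \<le> Y + (real n - real b - real N) * z"
    proof -
      obtain S0 where S0: "card S0 \<le> n - b" "th = sum y S0" using sig_in th_def by blast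
      have "c * z \<le> th" using w1 unfolding H_def by simp
      also have "\<dots> \<le> Y + (real (n - b) - real N) * z" using S0 top by simp
      finally show ?thesis using bn by simp
    qed
    have A: "c * y v \<le> Y + (real n - real (sz v) - real N) * z" if "v \<in> H" for v
    proof -
      have dv: "card (Nb v) \<le> n - sz v" using deg[of v] by (simp add: n_def sz_def)
      have "c * y v \<le> sum y (Nb v)" by (rule eig)
      also have "\<dots> \<le> Y + (real (n - sz v) - real N) * z" using top dv by simp
      also have "real (n - sz v) = real n - real (sz v)" using deg[of v] by (simp add: n_def sz_def)
      finally show ?thesis .
    qed
    have zpos: "z > 0"
    proof (rule ccontr)
      assume "\<not> z > 0"
      then have "z = 0" using z0 by simp
      obtain v where v: "v \<in> H" using False by blast
      have "c * y v \<le> Y" using A[OF v] \<open>z = 0\<close> by simp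
      moreover have "th < c * y v" using v unfolding H_def by simp
      ultimately show False using thY by simp
    qed
    define t where "t v = real n - real N - (c * y v - Y) / z" for v
    have szt: "real (sz v) \<le> t v" if "v \<in> H" for v
    proof -
      have "c * y v - Y \<le> (real n - real (sz v) - real N) * z" using A[OF that] by simp
      then have "(c * y v - Y) / z \<le> real n - real (sz v) - real N"
        using zpos by (simp add: pos_divide_le_eq)
      then show ?thesis unfolding t_def by simp
    qed
    have tpos: "t v > 0" if "v \<in> H" for v using szt[OF that] sz1[of v] by simp
    define T where "T = sum t H"
    have Tdef: "T = real N * (real n - real N) - (c - real N) * (Y / z)"
    proof -
      have "T = (\<Sum>v\<in>H. real n - real N) - (\<Sum>v\<in>H. (c * y v - Y) / z)"
        unfolding T_def t_def by (rule sum_subtractf)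
      also have "(\<Sum>v\<in>H. (c * y v - Y) / z) = (c * Y - real N * Y) / z"
        by (simp add: sum_divide_distrib[symmetric] sum_subtractf sum_distrib_left Y_def N_def)
      finally show ?thesis by (simp add: N_def algebra_simps diff_divide_distrib)
    qed
    have Tpos: "T > 0" unfolding T_def using False tpos by (simp add: sum_pos)
    have HS: "real N ^ 2 / T \<le> (\<Sum>v\<in>H. 1 / real (sz v))"
    proof -
      have "real N ^ 2 / T \<le> (\<Sum>v\<in>H. 1 / t v)"
        unfolding N_def T_def by (rule hm_am) (use False tpos in auto)
      also have "\<dots> \<le> (\<Sum>v\<in>H. 1 / real (sz v))"
        by (rule sum_mono) (use szt sz1 tpos in \<open>auto intro!: divide_left_mono mult_pos_pos simp: Suc_le_eq\<close>)
      finally show ?thesis .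
    qed
    define R where "R = UNIV - PL - H"
    have cardR: "card R = n - b - N"
    proof -
      have "card R = card (UNIV - PL) - card H"
        unfolding R_def using Hsub by (simp add: card_Diff_subset)
      also have "card (UNIV - PL) = n - b" using cardPL by (simp add: card_Diff_subset n_def)
      finally show ?thesis by (simp add: N_def)
    qed
    have rdec: "real r \<ge> 1 + real N ^ 2 / T + (real n - real b - real N) / real b"
    proof -
      let ?g = "\<lambda>v. 1 / real (sz v)"
      have e1: "sum ?g UNIV = sum ?g (UNIV \<inter> PL) + sum ?g (UNIV - PL)" by (rule sum.Int_Diff) simp
      have e2: "sum ?g (UNIV - PL) = sum ?g ((UNIV - PL) \<inter> H) + sum ?g (UNIV - PL - H)"
        by (rule sum.Int_Diff) simp
      have e3: "(UNIV - PL) \<inter> H = H" using Hsub by blast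
      have "real r = (\<Sum>v\<in>PL. 1 / real (sz v)) + ((\<Sum>v\<in>H. 1 / real (sz v)) + (\<Sum>v\<in>R. 1 / real (sz v)))"
        using rsum e1 e2 e3 unfolding R_def by simp
      also have "(\<Sum>v\<in>PL. 1 / real (sz v)) = 1" using szPL cardPL b1 by simp
      also have "(\<Sum>v\<in>R. 1 / real (sz v)) \<ge> real (card R) * (1 / real b)"
      proof -
        have "1 / real b \<le> 1 / real (sz i)" for i
          using szb[of i] sz1[of i] by (intro divide_left_mono) (auto intro!: mult_pos_pos)
        then show ?thesis using sum_bounded_below[of R "1 / real b" "\<lambda>v. 1 / real (sz v)"] by auto
      qed
      moreover have "real (card R) = real n - real b - real N" using cardR Nnb bn by simp
      ultimately show ?thesis using HS by simp
    qed
    show ?thesis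
    proof (cases "real b \<le> real n - c")
      case True
      have "real n / (real n - c) \<le> real n / real b"
        using True b1 by (intro divide_left_mono) auto
      then show ?thesis using rnb unfolding n_def by linarith
    next
      case False
      define K where "K = c * (real b - real n + c)"
      have Kpos: "K > 0" unfolding K_def using False cpos by simp
      have Yz: "Y / z \<ge> c - real n + real b + real N"
        using B zpos by (simp add: le_divide_eq algebra_simps)
      define T0 where "T0 = real N * real b - K"
      have TT0: "T \<le> T0"
      proof -
        have "(c - real N) * (c - real n + real b + real N) \<le> (c - real N) * (Y / z)"
          using Yz cN by (intro mult_left_mono) auto
        then show ?thesis unfolding Tdef T0_def K_def by (simp add: algebra_simps)
      qed
      have T0pos: "T0 > 0" using TT0 Tpos by simp
      define M where "M = real n - real b"
      have NM: "real N \<le> M" using Nnb bn unfolding M_def by simp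
      define T1 where "T1 = M * real b - K"
      have T1pos: "T1 > 0"
      proof -
        have "real N * real b \<le> M * real b" using NM by (simp add: mult_right_mono)
        then show ?thesis using T0pos unfolding T1_def T0_def by simp
      qed
      have step1: "real N ^ 2 / T0 \<le> real N ^ 2 / T"
        using TT0 Tpos by (intro divide_left_mono) auto
      have eqN: "real N ^ 2 / T0 - real N / real b = K / real b * (real N / T0)"
        using T0pos b1 unfolding T0_def by (simp add: field_simps power2_eq_square)
      have eqM: "M ^ 2 / T1 - M / real b = K / real b * (M / T1)"
        using T1pos b1 unfolding T1_def by (simp add: field_simps power2_eq_square)
      have NMT: "M / T1 \<le> real N / T0"
      proof -
        have "M * T0 \<le> real N * T1"
          using NM Kpos unfolding T0_def T1_def by (simp add: algebra_simps mult_right_mono)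
        then show ?thesis using T0pos T1pos by (simp add: divide_le_eq_1 field_simps)
      qed
      have "K / real b * (M / T1) \<le> K / real b * (real N / T0)"
        using NMT Kpos b1 by (intro mult_left_mono) auto
      then have ineq: "M ^ 2 / T1 - M / real b \<le> real N ^ 2 / T0 - real N / real b"
        using eqN eqM by simp
      have d: "(real n - real b - real N) / real b = M / real b - real N / real b"
        unfolding M_def by (simp add: diff_divide_distrib)
      have rM: "real r \<ge> 1 + M ^ 2 / T1"
        using rdec step1 ineq d by linarith
      have fin: "real n / (real n - c) - 1/3 < 1 + M ^ 2 / T1"
        unfolding M_def
      proof (rule alg_final)
        show "0 < real n - c" using cn by simp
        show "real n - c < real b" using False by simp
        show "real b < real n" using NM Npos unfolding M_def by simp
        show "T1 = (real n - real b) * real b - (real n - (real n - c)) * (real b - (real n - c))"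
          unfolding T1_def M_def K_def by (simp add: algebra_simps)
        show "0 < T1" by (rule T1pos)
      qed
      show ?thesis using fin rM unfolding n_def by linarith
    qed
  qed
qed

theorem corollary12:
  fixes E :: "'a::finite \<Rightarrow> 'a \<Rightarrow> bool"
  assumes "simple_graph E"
  shows "real CARD('a) / (real CARD('a) - mu E) < real (phi E) + 1 / 3"
proof -
  have sym: "\<And>u v. E u v \<Longrightarrow> E v u" and irr: "\<And>v. \<not> E v v"
    using assms unfolding simple_graph_def by auto
  define n where "n = CARD('a)"
  have degle: "degree E v + 1 \<le> n" for v
  proof -
    have "{u. E v u} \<subset> UNIV" using irr by blast
    then have "card {u. E v u} < n" unfolding n_def by (rule psubset_card_mono[OF finite])
    then show ?thesis unfolding degree_def by simp
  qed
  have ex: "\<exists>f. good_partition E n f"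
  proof -
    obtain h :: "'a \<Rightarrow> nat" where h: "bij_betw h UNIV {0..<n}"
      using ex_bij_betw_finite_nat[of "UNIV :: 'a set"] unfolding n_def by auto
    have "card {u. h u = h v} = 1" for v
    proof -
      have "{u. h u = h v} = {v}" using h unfolding bij_betw_def inj_on_def by auto
      then show ?thesis by simp
    qed
    then have "good_partition E n h"
      unfolding good_partition_def using h degle unfolding bij_betw_def n_def
      by (metis (no_types, lifting) le_diff_conv2 add.commute Suc_eq_plus1 One_nat_def le_add2 order_trans)
    then show ?thesis by blast
  qed
  have "\<exists>f. good_partition E (phi E) f"
    unfolding phi_def by (rule LeastI_ex) (use ex in blast)
  then obtain f where gp: "good_partition E (phi E) f" by blast
  have part: "f ` UNIV = {0..<phi E}" using gp unfolding good_partition_def by simp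
  have r1: "phi E \<ge> 1"
  proof (rule ccontr)
    assume "\<not> phi E \<ge> 1"
    then have "phi E = 0" by simp
    then show False using part by simp
  qed
  obtain x where x: "x \<noteq> 0" "adjacency_matrix E *v x = mu E *\<^sub>R x"
    using mu_eig[OF assms] by blast
  show ?thesis
  proof (cases "mu E \<le> 0")
    case True
    have np: "real CARD('a) > 0" by simp
    have "real CARD('a) / (real CARD('a) - mu E) \<le> 1"
      using True np by (subst divide_le_eq_1) auto
    then show ?thesis using r1 by linarith
  next
    case False
    show ?thesis
    proof (rule key[where y = "\<lambda>v. \<bar>x $ v\<bar>" and Nb = "\<lambda>v. {u. E v u}" and f = f])
      show "\<And>v. 0 \<le> \<bar>x $ v\<bar>" by simp
      show "\<exists>v. 0 < \<bar>x $ v\<bar>" using x(1) by (simp add: vec_eq_iff)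
      show "0 < mu E" using False by simp
      show "mu E * \<bar>x $ v\<bar> \<le> sum (\<lambda>v. \<bar>x $ v\<bar>) {u. E v u}" for v
      proof -
        have "mu E * x $ v = (adjacency_matrix E *v x) $ v" using x(2) by simp
        also have "\<dots> = sum (\<lambda>u. x $ u) {u. E v u}" by (rule adj_row)
        finally have "mu E * \<bar>x $ v\<bar> = \<bar>sum (\<lambda>u. x $ u) {u. E v u}\<bar>"
          using False by (metis abs_mult abs_of_pos not_le)
        also have "\<dots> \<le> sum (\<lambda>u. \<bar>x $ u\<bar>) {u. E v u}" by (rule sum_abs)
        finally show ?thesis .
      qed
      show "\<And>v. v \<notin> {u. E v u}" using irr by simp
      show "card {u. E v u} + card {u. f u = f v} \<le> CARD('a)" for v
      proof -
        have "card {u. f u = f v} \<le> CARD('a)" by (rule card_mono) auto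
        then show ?thesis using gp unfolding good_partition_def degree_def by (metis le_diff_conv2 add.commute)
      qed
      show "f ` UNIV = {0..<phi E}" by (rule part)
    qed
  qed
qed

end
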